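(* Let $X$ be a real reflexive Banach space and $\varepsilon\in[0,2)$. Then a functional $f\in X^*\setminus\{\theta\}$ is $\varepsilon$-smooth (as an element of the normed space $X^*$) if and only if $\operatorname{diam} M_f^+\le\varepsilon$, where $M_f^+=\{x\in S_X: f(x)=\|f\|\}$.
   Context: For a normed space $Z$ and $z\in Z\setminus\{\theta\}$, $J(z)=\{\phi\in S_{Z^*}:\phi(z)=\|z\|\}$, and $z$ is called $\varepsilon$-smooth if $\operatorname{diam}J(z)\le\varepsilon$, where $\operatorname{diam}A=\sup_{a,b\in A}\|a-b\|$. Here this is applied with $Z=X^*$, so $J(f)\subset S_{X^{**}}$. $S_X$ denotes the unit sphere of $X$. *)

theory Defs
  imports "HOL-Analysis.Analysis"
begin

(* Dual space X* is the type 'a =>L real with operator norm; bidual is ('a =>L real) =>L real. *)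

definition evaluation_map :: "'a::real_normed_vector \<Rightarrow> (('a \<Rightarrow>\<^sub>L real) \<Rightarrow>\<^sub>L real)" where
  "evaluation_map x = Blinfun (\<lambda>f. blinfun_apply f x)"

definition reflexive_space :: "'a::real_normed_vector itself \<Rightarrow> bool" where
  "reflexive_space _ \<longleftrightarrow> surj (evaluation_map :: 'a \<Rightarrow> (('a \<Rightarrow>\<^sub>L real) \<Rightarrow>\<^sub>L real))"

definition unit_sphere :: "'a::real_normed_vector set" where
  "unit_sphere = {x. norm x = 1}"

definition duality_set :: "'a::real_normed_vector \<Rightarrow> ('a \<Rightarrow>\<^sub>L real) set" where
  "duality_set z = {\<phi>. norm \<phi> = 1 \<and> blinfun_apply \<phi> z = norm z}"

definition diam :: "'a::real_normed_vector set \<Rightarrow> real" where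
  "diam A = (SUP p\<in>A \<times> A. norm (fst p - snd p))"

definition eps_smooth :: "real \<Rightarrow> 'a::real_normed_vector \<Rightarrow> bool" where
  "eps_smooth \<epsilon> z \<longleftrightarrow> diam (duality_set z) \<le> \<epsilon>"

definition M_plus :: "('a::real_normed_vector \<Rightarrow>\<^sub>L real) \<Rightarrow> 'a set" where
  "M_plus f = {x \<in> unit_sphere. blinfun_apply f x = norm f}"

end

theory Submission
  imports Defs
begin

definition sublin :: "('a::real_vector \<Rightarrow> real) \<Rightarrow> bool" where
  "sublin p \<longleftrightarrow> (\<forall>x y. p (x + y) \<le> p x + p y) \<and> (\<forall>c x. 0 \<le> c \<longrightarrow> p (c *\<^sub>R x) = c * p x)"

lemma sublin_add: "sublin p \<Longrightarrow> p (x + y) \<le> p x + p y"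
  by (simp add: sublin_def)

lemma sublin_scale: "sublin p \<Longrightarrow> 0 \<le> c \<Longrightarrow> p (c *\<^sub>R x) = c * p x"
  by (simp add: sublin_def)

lemma sublin_0: "sublin p \<Longrightarrow> p 0 = 0"
  using sublin_scale[of p 0 0] by simp

lemma sublin_lower: "sublin p \<Longrightarrow> - p (- x) \<le> p x"
  using sublin_add[of p x "-x"] sublin_0[of p] by simp

definition shift :: "('a::real_vector \<Rightarrow> real) \<Rightarrow> 'a \<Rightarrow> 'a \<Rightarrow> real" where
  "shift p y x = Inf ((\<lambda>t. p (x + t *\<^sub>R y) - t * p y) ` {0..})"

lemma shift_bdd:
  assumes "sublin p"
  shows "bdd_below ((\<lambda>t. p (x + t *\<^sub>R y) - t * p y) ` {0..})"
proof (rule bdd_belowI2[where m="- p (- x)"])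
  fix t :: real assume "t \<in> {0..}"
  then have t: "0 \<le> t" by simp
  have "p (t *\<^sub>R y) \<le> p (x + t *\<^sub>R y) + p (- x)"
    using sublin_add[OF assms, of "x + t *\<^sub>R y" "-x"] by simp
  then show "- p (- x) \<le> p (x + t *\<^sub>R y) - t * p y"
    using sublin_scale[OF assms t, of y] by simp
qed

lemma shift_le:
  assumes "sublin p" "0 \<le> t"
  shows "shift p y x \<le> p (x + t *\<^sub>R y) - t * p y"
  unfolding shift_def
  by (rule cInf_lower[OF _ shift_bdd[OF assms(1)]]) (use assms(2) in auto)

lemma shift_ge:
  assumes "\<And>t. 0 \<le> t \<Longrightarrow> a \<le> p (x + t *\<^sub>R y) - t * p y"
  shows "a \<le> shift p y x"
  unfolding shift_def
  by (rule cInf_greatest) (use assms in auto)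

lemma shift_le_p: "sublin p \<Longrightarrow> shift p y x \<le> p x"
  using shift_le[of p 0 y x] by simp

lemma sublin_shift:
  assumes sp: "sublin p"
  shows "sublin (shift p y)"
  unfolding sublin_def
proof (intro conjI allI impI)
  fix x1 x2
  have "shift p y (x1 + x2) - (p (x2 + t2 *\<^sub>R y) - t2 * p y) \<le> shift p y x1" if t2: "0 \<le> t2" for t2
  proof (rule shift_ge)
    fix t1 :: real assume t1: "0 \<le> t1"
    have "shift p y (x1 + x2) \<le> p (x1 + x2 + (t1 + t2) *\<^sub>R y) - (t1 + t2) * p y"
      using shift_le[OF sp, of "t1 + t2"] t1 t2 by simp
    also have "x1 + x2 + (t1 + t2) *\<^sub>R y = (x1 + t1 *\<^sub>R y) + (x2 + t2 *\<^sub>R y)"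
      by (simp add: algebra_simps)
    also have "p \<dots> \<le> p (x1 + t1 *\<^sub>R y) + p (x2 + t2 *\<^sub>R y)"
      by (rule sublin_add[OF sp])
    finally show "shift p y (x1 + x2) - (p (x2 + t2 *\<^sub>R y) - t2 * p y) \<le> p (x1 + t1 *\<^sub>R y) - t1 * p y"
      by (simp add: algebra_simps)
  qed
  then have "shift p y (x1 + x2) - shift p y x1 \<le> shift p y x2"
    by (intro shift_ge) (simp add: algebra_simps)
  then show "shift p y (x1 + x2) \<le> shift p y x1 + shift p y x2" by simp
next
  fix c :: real and x :: 'a
  assume c: "0 \<le> c"
  show "shift p y (c *\<^sub>R x) = c * shift p y x"
  proof (cases "c = 0")
    case True
    have "shift p y 0 \<le> 0" using shift_le_p[OF sp, of y 0] sublin_0[OF sp] by simp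
    moreover have "0 \<le> shift p y 0"
      by (rule shift_ge) (simp add: sublin_scale[OF sp])
    ultimately show ?thesis using True by simp
  next
    case False
    then have cp: "0 < c" using c by simp
    have "shift p y (c *\<^sub>R x) / c \<le> shift p y x"
    proof (rule shift_ge)
      fix t :: real assume t: "0 \<le> t"
      have "shift p y (c *\<^sub>R x) \<le> p (c *\<^sub>R x + (c * t) *\<^sub>R y) - (c * t) * p y"
        using shift_le[OF sp, of "c * t"] t c by simp
      also have "c *\<^sub>R x + (c * t) *\<^sub>R y = c *\<^sub>R (x + t *\<^sub>R y)" by (simp add: algebra_simps)
      also have "p \<dots> = c * p (x + t *\<^sub>R y)" using sublin_scale[OF sp c] by simp
      finally have "shift p y (c *\<^sub>R x) \<le> c * (p (x + t *\<^sub>R y) - t * p y)"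
        by (simp add: algebra_simps)
      then show "shift p y (c *\<^sub>R x) / c \<le> p (x + t *\<^sub>R y) - t * p y"
        using cp by (simp add: divide_le_eq mult.commute)
    qed
    moreover have "c * shift p y x \<le> shift p y (c *\<^sub>R x)"
    proof (rule shift_ge)
      fix t :: real assume t: "0 \<le> t"
      have "shift p y x \<le> p (x + (t / c) *\<^sub>R y) - (t / c) * p y"
        using shift_le[OF sp, of "t / c"] t cp by simp
      also have "\<dots> = (p (c *\<^sub>R x + t *\<^sub>R y) - t * p y) / c"
      proof -
        have "c *\<^sub>R x + t *\<^sub>R y = c *\<^sub>R (x + (t / c) *\<^sub>R y)" using cp by (simp add: algebra_simps)
        then have "p (c *\<^sub>R x + t *\<^sub>R y) = c * p (x + (t / c) *\<^sub>R y)"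
          using sublin_scale[OF sp c] by simp
        then show ?thesis using cp by (simp add: field_simps)
      qed
      finally show "c * shift p y x \<le> p (c *\<^sub>R x + t *\<^sub>R y) - t * p y"
        using cp by (simp add: le_divide_eq mult.commute)
    qed
    ultimately show ?thesis using cp by (simp add: divide_le_eq mult.commute)
  qed
qed

lemma minimal_linear:
  assumes sp: "sublin p"
    and minimal: "\<And>p'. sublin p' \<Longrightarrow> (\<And>x. p' x \<le> p x) \<Longrightarrow> p' = p"
  shows "linear p"
proof -
  have add: "p (x + y) = p x + p y" for x y
  proof -
    have "shift p y = p" by (rule minimal[OF sublin_shift[OF sp] shift_le_p[OF sp]])
    then have "p x \<le> p (x + 1 *\<^sub>R y) - 1 * p y" using shift_le[OF sp, of 1 y x] by simp
    then show ?thesis using sublin_add[OF sp, of x y] by simp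
  qed
  have neg: "p (- x) = - p x" for x
    using add[of x "-x"] sublin_0[OF sp] by simp
  show ?thesis
  proof (rule linearI)
    show "p (b1 + b2) = p b1 + p b2" for b1 b2 by (rule add)
    show "p (r *\<^sub>R b) = r *\<^sub>R p b" for r b
    proof (cases "0 \<le> r")
      case True then show ?thesis using sublin_scale[OF sp] by simp
    next
      case False
      then have "p (r *\<^sub>R b) = p (- ((- r) *\<^sub>R b))" by simp
      also have "\<dots> = - p ((- r) *\<^sub>R b)" by (rule neg)
      also have "\<dots> = r * p b" using sublin_scale[OF sp, of "-r" b] False by simp
      finally show ?thesis by simp
    qed
  qed
qed

lemma sublinear_dominated:
  fixes q :: "'a::real_vector \<Rightarrow> real"
  assumes sq: "sublin q"
  shows "\<exists>f. linear f \<and> (\<forall>x. f x \<le> q x)"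
proof -
  define A where "A = {p. sublin p \<and> p \<le> q}"
  define P where "P = (\<lambda>a b::'a \<Rightarrow> real. b \<le> a)"
  have po: "partial_order_on A (relation_of P A)"
    unfolding partial_order_on_def preorder_on_def refl_on_def trans_def antisym_def relation_of_def P_def
    by auto
  have ch: "\<exists>u\<in>A. \<forall>a\<in>C. P a u" if C: "C \<in> Chains (relation_of P A)" for C
  proof (cases "C = {}")
    case True
    then show ?thesis using sq unfolding A_def by auto
  next
    case False
    have CA: "C \<subseteq> A"
      using C unfolding Chains_def relation_of_def by auto
    have cmp: "a \<le> b \<or> b \<le> a" if "a \<in> C" "b \<in> C" for a b
      using C that unfolding Chains_def relation_of_def P_def by auto
    define u where "u = (\<lambda>x. Inf ((\<lambda>p. p x) ` C))"
    have bdd: "bdd_below ((\<lambda>p. p x) ` C)" for x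
    proof (rule bdd_belowI2[where m="- q (- x)"])
      fix p assume "p \<in> C"
      then have "sublin p" "p \<le> q" using CA unfolding A_def by auto
      then have "p (- x) \<le> q (- x)" by (auto simp: le_fun_def)
      then show "- q (- x) \<le> p x" using sublin_lower[OF \<open>sublin p\<close>, of x] by linarith
    qed
    have ule: "u x \<le> p x" if "p \<in> C" for p x
      unfolding u_def by (rule cInf_lower[OF _ bdd]) (use that in auto)
    have uge: "a \<le> u x" if "\<And>p. p \<in> C \<Longrightarrow> a \<le> p x" for a x
      unfolding u_def by (rule cInf_greatest) (use that False in auto)
    have "sublin u"
      unfolding sublin_def
    proof (intro conjI allI impI)
      fix x y
      have "u (x + y) - p2 y \<le> u x" if p2: "p2 \<in> C" for p2
      proof (rule uge)
        fix p1 assume p1: "p1 \<in> C"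
        have "u (x + y) \<le> p1 x + p2 y"
        proof (cases "p1 \<le> p2")
          case True
          have "u (x + y) \<le> p1 (x + y)" by (rule ule[OF p1])
          also have "\<dots> \<le> p1 x + p1 y" using p1 CA unfolding A_def by (auto intro: sublin_add)
          also have "\<dots> \<le> p1 x + p2 y" using True by (auto simp: le_fun_def)
          finally show ?thesis .
        next
          case False
          then have le: "p2 \<le> p1" using cmp[OF p1 p2] by auto
          have "u (x + y) \<le> p2 (x + y)" by (rule ule[OF p2])
          also have "\<dots> \<le> p2 x + p2 y" using p2 CA unfolding A_def by (auto intro: sublin_add)
          also have "\<dots> \<le> p1 x + p2 y" using le by (auto simp: le_fun_def)
          finally show ?thesis .
        qed
        then show "u (x + y) - p2 y \<le> p1 x" by simp
      qed
      then have "u (x + y) - u x \<le> u y" by (intro uge) (simp add: algebra_simps)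
      then show "u (x + y) \<le> u x + u y" by simp
    next
      fix c :: real and x :: 'a
      assume c: "0 \<le> c"
      have sc: "p (c *\<^sub>R x) = c * p x" if "p \<in> C" for p
        using that CA unfolding A_def by (auto intro: sublin_scale[OF _ c])
      show "u (c *\<^sub>R x) = c * u x"
      proof (cases "c = 0")
        case True
        obtain p0 where p0: "p0 \<in> C" using False by auto
        have "u (c *\<^sub>R x) \<le> 0" using ule[OF p0, of "c *\<^sub>R x"] sc[OF p0] True by simp
        moreover have "0 \<le> u (c *\<^sub>R x)" by (rule uge) (use sc True in force)
        ultimately show ?thesis using True by simp
      next
        case False
        then have cp: "0 < c" using c by simp
        have "u (c *\<^sub>R x) / c \<le> u x"
        proof (rule uge)
          fix p assume p: "p \<in> C"
          have "u (c *\<^sub>R x) \<le> c * p x" using ule[OF p] sc[OF p] by metis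
          then show "u (c *\<^sub>R x) / c \<le> p x" using cp by (simp add: divide_le_eq mult.commute)
        qed
        moreover have "c * u x \<le> u (c *\<^sub>R x)"
        proof (rule uge)
          fix p assume p: "p \<in> C"
          show "c * u x \<le> p (c *\<^sub>R x)" using ule[OF p, of x] sc[OF p] c
            by (simp add: mult_left_mono)
        qed
        ultimately show ?thesis using cp by (simp add: field_simps)
      qed
    qed
    moreover have "u \<le> q"
    proof -
      obtain p0 where p0: "p0 \<in> C" using False by auto
      then have "p0 \<le> q" using CA unfolding A_def by auto
      then show ?thesis using ule[OF p0] by (auto simp: le_fun_def intro: order_trans)
    qed
    ultimately have "u \<in> A" unfolding A_def by auto
    moreover have "\<forall>a\<in>C. P a u" unfolding P_def using ule by (auto simp: le_fun_def)
    ultimately show ?thesis by blast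
  qed
  obtain m where m: "m \<in> A" and mmin: "\<And>a. a \<in> A \<Longrightarrow> P m a \<Longrightarrow> a = m"
    using predicate_Zorn[OF po ch] by blast
  have sm: "sublin m" and mq: "m \<le> q" using m unfolding A_def by auto
  have "linear m"
  proof (rule minimal_linear[OF sm])
    fix p' assume "sublin p'" "\<And>x. p' x \<le> m x"
    moreover then have "p' \<le> q" using mq by (auto simp: le_fun_def intro: order_trans)
    ultimately show "p' = m" using mmin unfolding A_def P_def by (auto simp: le_fun_def)
  qed
  then show ?thesis using mq by (auto simp: le_fun_def)
qed

lemma sublin_norm: "sublin (norm :: 'a::real_normed_vector \<Rightarrow> real)"
  unfolding sublin_def by (auto simp: norm_triangle_ineq)

lemma norming_functional:
  fixes z :: "'a::real_normed_vector"
  shows "\<exists>g::'a \<Rightarrow>\<^sub>L real. norm g \<le> 1 \<and> blinfun_apply g z = norm z"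
proof -
  define q where "q = shift norm z"
  have sq: "sublin q" unfolding q_def by (rule sublin_shift[OF sublin_norm])
  obtain f where lf: "linear f" and fq: "\<And>x. f x \<le> q x"
    using sublinear_dominated[OF sq] by blast
  have fn: "f x \<le> norm x" for x
    using fq[of x] shift_le_p[OF sublin_norm, of z x] unfolding q_def by simp
  have fabs: "\<bar>f x\<bar> \<le> norm x" for x
    using fn[of x] fn[of "-x"] linear_neg[OF lf, of x] by simp
  have "q (- z) \<le> norm (- z + 1 *\<^sub>R z) - 1 * norm z"
    unfolding q_def by (rule shift_le[OF sublin_norm]) simp
  then have "f (- z) \<le> - norm z" using fq[of "-z"] by simp
  then have fz: "f z = norm z" using fn[of z] linear_neg[OF lf, of z] by simp
  have bl: "bounded_linear f"
    by (rule bounded_linear_intro[where K=1])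
       (use lf fabs in \<open>auto simp: linear_add linear_scale\<close>)
  show ?thesis
  proof (intro exI conjI)
    show "norm (Blinfun f) \<le> 1"
      by (rule norm_blinfun_bound) (use fabs in \<open>auto simp: bounded_linear_Blinfun_apply[OF bl]\<close>)
    show "blinfun_apply (Blinfun f) z = norm z"
      by (simp add: bounded_linear_Blinfun_apply[OF bl] fz)
  qed
qed

lemma evaluation_map_apply: "blinfun_apply (evaluation_map x) g = blinfun_apply g x"
proof -
  have "bounded_linear (\<lambda>f::'a \<Rightarrow>\<^sub>L real. blinfun_apply f x)"
    by (rule blinfun.bounded_linear_left)
  then show ?thesis unfolding evaluation_map_def by (simp add: bounded_linear_Blinfun_apply)
qed

lemma norm_evaluation_map: "norm (evaluation_map (x::'a::real_normed_vector)) = norm x"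
proof (rule antisym)
  show "norm (evaluation_map x) \<le> norm x"
  proof (rule norm_blinfun_bound)
    fix g :: "'a \<Rightarrow>\<^sub>L real"
    show "norm (blinfun_apply (evaluation_map x) g) \<le> norm x * norm g"
      using norm_blinfun[of g x] by (simp add: evaluation_map_apply mult.commute)
  qed simp
  obtain g :: "'a \<Rightarrow>\<^sub>L real" where g: "norm g \<le> 1" "blinfun_apply g x = norm x"
    using norming_functional by blast
  have "norm x = norm (blinfun_apply (evaluation_map x) g)" using g by (simp add: evaluation_map_apply)
  also have "\<dots> \<le> norm (evaluation_map x) * norm g" by (rule norm_blinfun)
  also have "\<dots> \<le> norm (evaluation_map x)"
    using g(1) by (simp add: mult_left_le)
  finally show "norm x \<le> norm (evaluation_map x)" .
qed

lemma evaluation_map_diff: "evaluation_map (x - y) = evaluation_map x - evaluation_map y"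
  by (rule blinfun_eqI) (simp add: evaluation_map_apply blinfun.diff_right blinfun.diff_left)

theorem lemma2p4:
  fixes f :: "'a::banach \<Rightarrow>\<^sub>L real" and \<epsilon> :: real
  assumes "reflexive_space TYPE('a)"
    and "0 \<le> \<epsilon>" and "\<epsilon> < 2"
    and "f \<noteq> 0"
  shows "eps_smooth \<epsilon> f \<longleftrightarrow> diam (M_plus f) \<le> \<epsilon>"
proof -
  have surj: "surj (evaluation_map :: 'a \<Rightarrow> _)"
    using assms(1) unfolding reflexive_space_def by simp
  have J: "duality_set f = evaluation_map ` M_plus f"
  proof
    show "duality_set f \<subseteq> evaluation_map ` M_plus f"
    proof
      fix \<phi> assume \<phi>: "\<phi> \<in> duality_set f"
      obtain x :: 'a where x: "\<phi> = evaluation_map x" using surj by (metis surjD)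
      have "x \<in> M_plus f"
        using \<phi> unfolding x duality_set_def M_plus_def unit_sphere_def
        by (simp add: norm_evaluation_map evaluation_map_apply)
      then show "\<phi> \<in> evaluation_map ` M_plus f" using x by blast
    qed
    show "evaluation_map ` M_plus f \<subseteq> duality_set f"
      unfolding duality_set_def M_plus_def unit_sphere_def
      by (auto simp: norm_evaluation_map evaluation_map_apply)
  qed
  have img: "(\<lambda>p. norm (fst p - snd p)) ` (duality_set f \<times> duality_set f)
      = (\<lambda>p. norm (fst p - snd p)) ` (M_plus f \<times> M_plus f)"
  proof -
    have "(\<lambda>p. norm (fst p - snd p)) ` (evaluation_map ` M_plus f \<times> evaluation_map ` M_plus f)
      = (\<lambda>p. norm (fst p - snd p)) ` ((\<lambda>(a, b). (evaluation_map a, evaluation_map b)) ` (M_plus f \<times> M_plus f))"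
      by (simp add: map_prod_surj_on[symmetric] map_prod_def)
    also have "\<dots> = (\<lambda>p. norm (fst p - snd p)) ` (M_plus f \<times> M_plus f)"
      unfolding image_image
      by (rule image_cong) (auto simp: evaluation_map_diff[symmetric] norm_evaluation_map)
    finally show ?thesis using J by simp
  qed
  have "diam (duality_set f) = diam (M_plus f)"
    unfolding diam_def using img by simp
  then show ?thesis unfolding eps_smooth_def by simp
qed

end
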